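(* Let $\lambda>0$, $\rho>1$, $n\ge1$, and let $X,X_1,\ldots,X_n$ be i.i.d. $\mathrm{Exp}(\lambda)$. Let $J_n\coloneqq\log_\rho X_{(n)}$ where $X_{(n)}=\max_i X_i$, and define \[p_{\mathrm{last}}\coloneqq\Pr\left(\rho^{\lceil J_n\rceil-1}<X\le\rho^{\lceil J_n\rceil}\right),\qquad p_{\mathrm{tail}}\coloneqq\Pr\left(X>\rho^{\lceil J_n\rceil}\right)\] (probabilities taken jointly over $X$ and $X_1,\ldots,X_n$). Then \[p_{\mathrm{last}}\le nB(1+1/\rho,n)-nB(1+\rho,n)\sim\frac{\Gamma(1+1/\rho)}{n^{1/\rho}}-\frac{\Gamma(1+\rho)}{n^\rho},\] \[\frac{\Gamma(1+\rho)}{n^\rho}\sim nB(1+\rho,n)\le p_{\mathrm{tail}}\le\frac{1}{n+1}\sim\frac1n,\] where the asymptotic equivalences hold as $n\to\infty$.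
   Context: $\mathrm{Exp}(\lambda)$ has density $\lambda e^{-\lambda x}$ on $(0,\infty)$. $B$ is the Beta function and $\Gamma$ the Gamma function; $\sim$ means the ratio tends to 1. *)

theory Defs
  imports "HOL-Probability.Probability" "HOL-Library.Landau_Symbols"
begin

end

theory Submission
  imports Defs "HOL-Real_Asymp.Real_Asymp"
begin

lemma beta_exp_integral:
  fixes c l :: real and n :: nat
  assumes c: "c > 0" and l: "l > 0"
  shows "(\<integral>\<^sup>+x. ennreal (exponential_density l x * (1 - exp (- (x * l / c)))^n) \<partial>lborel)
         = ennreal (c * Beta (real n + 1) c)"
proof -
  define \<phi> where "\<phi> v = v powr real n * (1 - v) powr (c - 1)" for v :: real
  define g where "g v = - (c / l) * ln (1 - v)" for v :: real
  define g' where "g' v = c / (l * (1 - v))" for v :: real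
  define h where "h x = exponential_density l x * (1 - exp (- (x * l / c)))^n" for x :: real
  have B: "(\<phi> has_integral Beta (real n + 1) c) {0<..<1}"
    using has_integral_Beta_real[of "real n + 1" c] c
    by (simp add: \<phi>_def[abs_def] has_integral_Icc_iff_Ioo)
  have \<phi>nn: "0 \<le> \<phi> v" for v by (simp add: \<phi>_def)
  have \<phi>meas: "\<phi> \<in> borel_measurable borel" unfolding \<phi>_def by measurable
  have "\<phi> absolutely_integrable_on {0<..<1}"
    using B \<phi>nn by (intro nonnegative_absolutely_integrable_1) (auto simp: has_integral_integrable)
  hence intphi: "set_integrable lborel {0<..<1} \<phi>"
    unfolding set_integrable_def
    by (subst integrable_completion[symmetric]) (auto intro!: borel_measurable_times borel_measurable_indicator \<phi>meas)
  have Bint: "(LBINT v=0..1. \<phi> v) = Beta (real n + 1) c"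
  proof -
    have "(LBINT v=0..1. \<phi> v) = (LINT v:{0<..<1}|lborel. \<phi> v)"
      unfolding interval_lebesgue_integral_def by (simp add: zero_ereal_def one_ereal_def)
    also have "\<dots> = integral {0<..<1} \<phi>" by (rule set_borel_integral_eq_integral(2)[OF intphi])
    also have "\<dots> = Beta (real n + 1) c" using B by (simp add: integral_unique)
    finally show ?thesis .
  qed
  have eq: "h (g v) * g' v = c * \<phi> v" if v: "0 < v" "v < 1" for v
  proof -
    have e1: "exp (- (g v * l / c)) = 1 - v" using v c l by (simp add: g_def)
    have e2: "exp (- (g v * l)) = (1 - v) powr c" using v c l
      by (simp add: g_def powr_def)
    have "ln (1 - v) \<le> 0" using v by simp
    hence gnn: "g v \<ge> 0" using v c l by (simp add: g_def divide_nonpos_pos mult_nonneg_nonpos)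
    have "h (g v) * g' v = l * (1 - v) powr c * v ^ n * (c / (l * (1 - v)))"
      using gnn by (simp add: h_def exponential_density_def e1 e2 g'_def)
    also have "\<dots> = c * (v ^ n * ((1 - v) powr c / (1 - v)))" using l v by (simp add: field_simps)
    also have "(1 - v) powr c / (1 - v) = (1 - v) powr (c - 1)" using v by (simp add: powr_diff)
    also have "v ^ n = v powr real n" using v by (simp add: powr_realpow)
    finally show ?thesis by (simp add: \<phi>_def)
  qed
  have intfg: "set_integrable lborel (einterval 0 1) (\<lambda>x. h (g x) * g' x)"
  proof -
    have "set_integrable lborel {0<..<1} (\<lambda>x. c * \<phi> x)" using intphi by simp
    thus ?thesis
      by (rule set_integrable_cong[THEN iffD1, rotated -1]) (auto simp: eq zero_ereal_def one_ereal_def)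
  qed
  have hcont: "isCont h y" if "y > 0" for y
  proof -
    have "eventually (\<lambda>x. x \<in> {0<..}) (nhds y)" using that
      by (intro eventually_nhds_in_open) auto
    hence "eventually (\<lambda>x. h x = l * exp (- x * l) * (1 - exp (- (x * l / c)))^n) (nhds y)"
      by eventually_elim (auto simp: h_def exponential_density_def)
    moreover have "isCont (\<lambda>x. l * exp (- x * l) * (1 - exp (- (x * l / c)))^n) y"
      using c by (intro continuous_intros) auto
    ultimately show ?thesis by (rule isCont_cong[THEN iffD2])
  qed
  have gpos: "g v > 0" if "0 < v" "v < 1" for v
  proof -
    have "ln (1 - v) < 0" using that by simp
    thus ?thesis using c l by (simp add: g_def divide_neg_pos mult_pos_neg)
  qed
  have hnn: "h x \<ge> 0" for x
  proof (cases "x < 0")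
    case False
    hence "x * l / c \<ge> 0" using c l by simp
    hence "exp (- (x * l / c)) \<le> 1" by simp
    thus ?thesis using l False by (simp add: h_def exponential_density_def)
  qed (simp add: h_def exponential_density_def)
  have sub: "set_integrable lborel (einterval 0 \<infinity>) h"
            "(LBINT x=0..\<infinity>. h x) = (LBINT x=0..1. h (g x) * g' x)"
  proof -
    have "(0::ereal) < 1" by simp
    moreover have "DERIV g x :> g' x" if "0 < ereal x" "ereal x < 1" for x
    proof -
      have x: "0 < x" "x < 1" using that by (auto simp: zero_ereal_def one_ereal_def)
      show ?thesis unfolding g_def[abs_def] g'_def
        by (rule derivative_eq_intros refl | use x l in \<open>simp add: field_simps\<close>)+
    qed
    moreover have "isCont h (g x)" if "0 < ereal x" "ereal x < 1" for x
      using that by (intro hcont gpos) (auto simp: zero_ereal_def one_ereal_def)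
    moreover have "isCont g' x" if "0 < ereal x" "ereal x < 1" for x
      using that l unfolding g'_def by (intro continuous_intros) (auto simp: one_ereal_def)
    moreover have "0 \<le> h (g x)" for x by (rule hnn)
    moreover have "0 \<le> g' x" if "0 \<le> ereal x" "ereal x \<le> 1" for x
      using that l c by (auto simp: g'_def one_ereal_def)
    moreover have "((ereal \<circ> g \<circ> real_of_ereal) \<longlongrightarrow> 0) (at_right 0)"
    proof -
      have "(g \<longlongrightarrow> g 0) (at_right 0)" unfolding g_def
        by (intro tendsto_intros) auto
      thus ?thesis by (simp add: zero_ereal_def ereal_tendsto_simps g_def)
    qed
    moreover have "((ereal \<circ> g \<circ> real_of_ereal) \<longlongrightarrow> \<infinity>) (at_left 1)"
    proof -
      have "filterlim g at_top (at_left 1)" unfolding g_def using c l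
        by real_asymp
      thus ?thesis by (simp add: one_ereal_def ereal_tendsto_simps)
    qed
    ultimately show "set_integrable lborel (einterval 0 \<infinity>) h"
            "(LBINT x=0..\<infinity>. h x) = (LBINT x=0..1. h (g x) * g' x)"
      using interval_integral_substitution_nonneg[of 0 1 g g' h 0 \<infinity>] intfg by auto
  qed
  have "(LBINT x=0..1. h (g x) * g' x) = (LBINT x=0..1. c * \<phi> x)"
    by (rule interval_integral_cong) (auto simp: eq zero_ereal_def one_ereal_def)
  also have "\<dots> = c * Beta (real n + 1) c" using Bint by simp
  finally have I: "(LBINT x=0..\<infinity>. h x) = c * Beta (real n + 1) c" using sub(2) by simp
  have "(\<integral>\<^sup>+x. ennreal (h x) \<partial>lborel) = (\<integral>\<^sup>+x. ennreal (indicator {0<..} x * h x) \<partial>lborel)"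
  proof (rule nn_integral_cong_AE)
    show "AE x in lborel. ennreal (h x) = ennreal (indicator {0<..} x * h x)"
      using AE_lborel_singleton[of 0]
      by eventually_elim (auto simp: h_def exponential_density_def indicator_def)
  qed
  also have "\<dots> = ennreal (LINT x|lborel. indicator {0<..} x * h x)"
    using sub(1) hnn
    by (intro nn_integral_eq_integral) (auto simp: set_integrable_def zero_ereal_def)
  also have "(LINT x|lborel. indicator {0<..} x * h x) = (LBINT x=0..\<infinity>. h x)"
    by (simp add: interval_lebesgue_integral_def zero_ereal_def set_lebesgue_integral_def)
  finally show ?thesis using I by (simp add: h_def)
qed
lemma nB_limit:
  fixes c :: real assumes c: "c > 0"
  shows "(\<lambda>m::nat. real m powr c * (real m * Beta (1 + c) (real m))) \<longlonglongrightarrow> Gamma (1 + c)"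
proof -
  have "Gamma_series' (1 + c) \<longlonglongrightarrow> Gamma (1 + c)" by (rule Gamma_series'_LIMSEQ)
  moreover have "eventually (\<lambda>m. Gamma_series' (1 + c) m = real m powr c * (real m * Beta (1 + c) (real m))) sequentially"
    using eventually_gt_at_top[of 0]
  proof eventually_elim
    case (elim m)
    have nz: "1 + c \<notin> \<int>\<^sub>\<le>\<^sub>0" using c by (auto elim!: nonpos_Ints_cases)
    have p: "pochhammer (1 + c) m = Gamma (1 + c + real m) / Gamma (1 + c)"
      using pochhammer_Gamma[OF nz, of m] by simp
    have f: "fact (m - Suc 0) = Gamma (real m)"
      using elim Gamma_fact[of "m - 1", where 'a=real] by simp
    have e: "exp (ln (real m) + c * ln (real m)) = real m * real m powr c"
      using elim by (simp add: powr_def exp_add)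
    have G1: "Gamma (1 + c) > 0" "Gamma (1 + c + real m) > 0" using c by auto
    show ?case
      unfolding Gamma_series'_def Beta_def using G1 elim
      by (simp add: p e field_simps f)
  qed
  ultimately show ?thesis by (rule Lim_transform_eventually)
qed
lemma nB_equiv:
  fixes c :: real assumes c: "c > 0"
  shows "(\<lambda>m::nat. real m * Beta (1 + c) (real m)) \<sim>[at_top] (\<lambda>m. Gamma (1 + c) / real m powr c)"
proof (rule asymp_equivI')
  have G: "Gamma (1 + c) > 0" using c by auto
  have "(\<lambda>m::nat. real m powr c * (real m * Beta (1 + c) (real m)) / Gamma (1 + c)) \<longlonglongrightarrow> Gamma (1 + c) / Gamma (1 + c)"
    by (intro tendsto_divide nB_limit c tendsto_const) (use G in auto)
  hence "(\<lambda>m::nat. real m powr c * (real m * Beta (1 + c) (real m)) / Gamma (1 + c)) \<longlonglongrightarrow> 1"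
    using G by simp
  moreover have "eventually (\<lambda>m::nat. real m powr c * (real m * Beta (1 + c) (real m)) / Gamma (1 + c) =
     real m * Beta (1 + c) (real m) / (Gamma (1 + c) / real m powr c)) at_top"
    using eventually_gt_at_top[of 0] by eventually_elim (use G in auto)
  ultimately show "((\<lambda>m::nat. real m * Beta (1 + c) (real m) / (Gamma (1 + c) / real m powr c)) \<longlongrightarrow> 1) at_top"
    by (rule Lim_transform_eventually)
qed

lemma asymp_part:
  fixes \<rho> :: real assumes r: "\<rho> > 1"
  shows "(\<lambda>m::nat. real m * Beta (1 + 1 / \<rho>) (real m) - real m * Beta (1 + \<rho>) (real m))
         \<sim>[at_top] (\<lambda>m. Gamma (1 + 1 / \<rho>) / real m powr (1 / \<rho>) - Gamma (1 + \<rho>) / real m powr \<rho>)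
     \<and> (\<lambda>m::nat. Gamma (1 + \<rho>) / real m powr \<rho>) \<sim>[at_top] (\<lambda>m. real m * Beta (1 + \<rho>) (real m))
     \<and> (\<lambda>m::nat. 1 / (real m + 1)) \<sim>[at_top] (\<lambda>m. 1 / real m)"
proof (intro conjI)
  show "(\<lambda>m::nat. 1 / (real m + 1)) \<sim>[at_top] (\<lambda>m. 1 / real m)" by real_asymp
  have rp: "\<rho> > 0" "1 / \<rho> > 0" using r by auto
  have eb: "(\<lambda>m::nat. real m * Beta (1 + \<rho>) (real m)) \<sim>[at_top] (\<lambda>m. Gamma (1 + \<rho>) / real m powr \<rho>)"
    by (rule nB_equiv[OF rp(1)])
  thus "(\<lambda>m::nat. Gamma (1 + \<rho>) / real m powr \<rho>) \<sim>[at_top] (\<lambda>m. real m * Beta (1 + \<rho>) (real m))"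
    by (rule asymp_equiv_symI)
  have ea: "(\<lambda>m::nat. real m * Beta (1 + 1 / \<rho>) (real m)) \<sim>[at_top] (\<lambda>m. Gamma (1 + 1 / \<rho>) / real m powr (1 / \<rho>))"
    by (rule nB_equiv[OF rp(2)])
  have G: "Gamma (1 + \<rho>) \<noteq> 0" "Gamma (1 + 1 / \<rho>) \<noteq> 0" proof -
    have "Gamma (1 + \<rho>) > 0" "Gamma (1 + 1 / \<rho>) > 0" using rp by (intro Gamma_real_pos; linarith)+
    thus "Gamma (1 + \<rho>) \<noteq> 0" "Gamma (1 + 1 / \<rho>) \<noteq> 0" by auto
  qed
  have "1/\<rho> < \<rho>" using r by (simp add: field_simps) (metis less_1_mult)
  hence o1: "(\<lambda>m::nat. 1 / real m powr \<rho>) \<in> o(\<lambda>m. 1 / real m powr (1/\<rho>))" by real_asymp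
  have oB: "(\<lambda>m::nat. Gamma (1 + \<rho>) / real m powr \<rho>) \<in> o(\<lambda>m. Gamma (1 + 1 / \<rho>) / real m powr (1/\<rho>))"
    using o1 G by (simp add: divide_inverse landau_o.small.cmult_in_iff landau_o.small.cmult flip: inverse_eq_divide)
  have ob: "(\<lambda>m::nat. real m * Beta (1 + \<rho>) (real m)) \<in> o(\<lambda>m. Gamma (1 + 1 / \<rho>) / real m powr (1/\<rho>))"
    by (rule landau_o.big_small_trans[OF asymp_equiv_imp_bigo[OF eb] oB])
  have "(\<lambda>m::nat. real m * Beta (1 + 1 / \<rho>) (real m) + (- (real m * Beta (1 + \<rho>) (real m))))
         \<sim>[at_top] (\<lambda>m. Gamma (1 + 1 / \<rho>) / real m powr (1 / \<rho>))"
    by (rule asymp_equiv_add_right[THEN iffD2, OF _ ea]) (use ob in simp)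
  hence 1: "(\<lambda>m::nat. real m * Beta (1 + 1 / \<rho>) (real m) - real m * Beta (1 + \<rho>) (real m))
         \<sim>[at_top] (\<lambda>m. Gamma (1 + 1 / \<rho>) / real m powr (1 / \<rho>))" by simp
  have "(\<lambda>m::nat. Gamma (1 + 1 / \<rho>) / real m powr (1 / \<rho>) + (- (Gamma (1 + \<rho>) / real m powr \<rho>)))
         \<sim>[at_top] (\<lambda>m. Gamma (1 + 1 / \<rho>) / real m powr (1 / \<rho>))"
    by (rule asymp_equiv_add_right[THEN iffD2, OF _ asymp_equiv_refl]) (use oB in simp)
  hence 2: "(\<lambda>m::nat. Gamma (1 + 1 / \<rho>) / real m powr (1 / \<rho>) - Gamma (1 + \<rho>) / real m powr \<rho>)
         \<sim>[at_top] (\<lambda>m. Gamma (1 + 1 / \<rho>) / real m powr (1 / \<rho>))" by simp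
  show "(\<lambda>m::nat. real m * Beta (1 + 1 / \<rho>) (real m) - real m * Beta (1 + \<rho>) (real m))
         \<sim>[at_top] (\<lambda>m. Gamma (1 + 1 / \<rho>) / real m powr (1 / \<rho>) - Gamma (1 + \<rho>) / real m powr \<rho>)"
    by (rule asymp_equiv_trans[OF 1 asymp_equiv_symI[OF 2]])
qed
lemma Beta_shift:
  fixes c :: real and n :: nat
  assumes c: "c > 0" and n: "n \<ge> 1"
  shows "c * Beta (real n + 1) c = real n * Beta (1 + c) (real n)"
proof -
  have "real n \<notin> \<int>\<^sub>\<le>\<^sub>0" using n by (auto elim!: nonpos_Ints_cases)
  hence "Gamma (real n + 1) = real n * Gamma (real n)" by (rule Gamma_plus1)
  moreover have "c \<notin> \<int>\<^sub>\<le>\<^sub>0" using c by (auto elim!: nonpos_Ints_cases)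
  hence "Gamma (1 + c) = c * Gamma c" using Gamma_plus1[of c] by (simp add: add.commute)
  ultimately show ?thesis unfolding Beta_def by (simp add: add_ac)
qed

lemma (in prob_space) exp_lt_prob:
  assumes D: "distributed M lborel Z (exponential_density l)" and l: "l > 0" and t: "t \<ge> 0"
  shows "prob {\<omega> \<in> space M. Z \<omega> < t} = 1 - exp (- t * l)"
proof -
  have Zm: "Z \<in> borel_measurable M" using D by (auto simp: distributed_def)
  have "emeasure M (Z -` {t} \<inter> space M) = (\<integral>\<^sup>+x. ennreal (exponential_density l x) * indicator {t} x \<partial>lborel)"
    by (rule distributed_emeasure[OF D]) simp
  also have "\<dots> = (\<integral>\<^sup>+x. ennreal (exponential_density l t) * indicator {t} x \<partial>lborel)"
    by (intro nn_integral_cong) (auto simp: indicator_def)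
  also have "\<dots> = 0" by simp
  finally have z: "prob (Z -` {t} \<inter> space M) = 0" by (simp add: emeasure_eq_measure)
  have e: "{\<omega> \<in> space M. Z \<omega> \<le> t} = {\<omega> \<in> space M. Z \<omega> < t} \<union> (Z -` {t} \<inter> space M)" by auto
  have "prob ({\<omega> \<in> space M. Z \<omega> < t} \<union> (Z -` {t} \<inter> space M)) = prob {\<omega> \<in> space M. Z \<omega> < t} + prob (Z -` {t} \<inter> space M)"
    using Zm by (intro finite_measure_Union) (auto intro: measurable_sets)
  hence "prob {\<omega> \<in> space M. Z \<omega> \<le> t} = prob {\<omega> \<in> space M. Z \<omega> < t} + prob (Z -` {t} \<inter> space M)"
    by (simp only: e)
  thus ?thesis using exponential_distributedD_le[OF D t l] z by simp
qed

lemma (in prob_space) core: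
  fixes X :: "'a \<Rightarrow> real" and Xs :: "nat \<Rightarrow> 'a \<Rightarrow> real"
  assumes l: "l > 0" and c: "c > 0" and n: "n \<ge> 1"
    and DX: "distributed M lborel X (exponential_density l)"
    and DXs: "\<And>i. i \<in> {1..n} \<Longrightarrow> distributed M lborel (Xs i) (exponential_density l)"
    and ind: "indep_vars (\<lambda>_. borel) (\<lambda>i. if i = 0 then X else Xs i) {0..n}"
  shows "prob {\<omega> \<in> space M. c * Max ((\<lambda>i. Xs i \<omega>) ` {1..n}) < X \<omega>} = real n * Beta (1 + c) (real n)"
proof -
  define Z where "Z = (\<lambda>i. if i = 0 then X else Xs i)"
  define Y where "Y = (\<lambda>\<omega>. Max ((\<lambda>i. Xs i \<omega>) ` {1..n}))"
  have Xm[measurable]: "X \<in> borel_measurable M" using DX by (auto simp: distributed_def)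
  have Xsm[measurable]: "Xs i \<in> borel_measurable M" if "i \<in> {1..n}" for i
    using DXs[OF that] by (auto simp: distributed_def)
  have Ym[measurable]: "Y \<in> borel_measurable M" unfolding Y_def
    by (rule borel_measurable_Max) (auto intro: Xsm)
  have "indep_var borel ((\<lambda>f. f 0) \<circ> (\<lambda>\<omega>. restrict (\<lambda>i. Z i \<omega>) {0}))
          borel ((\<lambda>f. Max (f`{1..n})) \<circ> (\<lambda>\<omega>. restrict (\<lambda>i. Z i \<omega>) {1..n}))"
    using ind unfolding Z_def[symmetric]
    by (intro indep_var_compose[OF indep_var_restrict[OF ind[folded Z_def]]] borel_measurable_Max) auto
  also have "((\<lambda>f. f 0) \<circ> (\<lambda>\<omega>. restrict (\<lambda>i. Z i \<omega>) {0})) = X"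
    by (auto simp: Z_def)
  also have "((\<lambda>f. Max (f`{1..n})) \<circ> (\<lambda>\<omega>. restrict (\<lambda>i. Z i \<omega>) {1..n})) = Y"
  proof
    fix \<omega>
    have "(restrict (\<lambda>i. Z i \<omega>) {1..n}) ` {1..n} = (\<lambda>i. Xs i \<omega>) ` {1..n}"
      by (auto simp: Z_def)
    thus "((\<lambda>f. Max (f`{1..n})) \<circ> (\<lambda>\<omega>. restrict (\<lambda>i. Z i \<omega>) {1..n})) \<omega> = Y \<omega>"
      by (simp add: Y_def)
  qed
  finally have iv: "indep_var borel X borel Y" .
  have CDF: "prob {\<omega> \<in> space M. Y \<omega> < t} = (1 - exp (- t * l)) ^ n" if t: "t \<ge> 0" for t
  proof -
    have "{\<omega> \<in> space M. Y \<omega> < t} = (\<Inter>i\<in>{1..n}. Z i -` {..<t} \<inter> space M)"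
      using n by (auto simp: Y_def Z_def)
    also have "prob \<dots> = (\<Prod>i\<in>{1..n}. prob (Z i -` {..<t} \<inter> space M))"
      using n by (intro indep_varsD[OF ind[folded Z_def]]) auto
    also have "\<dots> = (\<Prod>i\<in>{1..n}. 1 - exp (- t * l))"
    proof (rule prod.cong)
      fix i assume i: "i \<in> {1..n}"
      have "Z i -` {..<t} \<inter> space M = {\<omega> \<in> space M. Xs i \<omega> < t}" using i by (auto simp: Z_def)
      thus "prob (Z i -` {..<t} \<inter> space M) = 1 - exp (- t * l)"
        using exp_lt_prob[OF DXs[OF i] l t] by simp
    qed simp
    finally show ?thesis by simp
  qed
  define A where "A = {p :: real \<times> real. c * snd p < fst p}"
  have "A = {p \<in> space (borel \<Otimes>\<^sub>M borel). c * snd p < fst p}"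
    by (auto simp: A_def space_pair_measure)
  also have "\<dots> \<in> sets (borel \<Otimes>\<^sub>M borel)" by measurable
  finally have Am: "A \<in> sets (borel \<Otimes>\<^sub>M borel)" .
  define F where "F x = (if x < 0 then 0 else (1 - exp (- (x * l / c))) ^ n)" for x :: real
  have Fm[measurable]: "F \<in> borel_measurable borel" unfolding F_def[abs_def] by measurable
  interpret DY: prob_space "distr M borel Y" by (rule prob_space_distr) simp
  have dj: "distr M (borel \<Otimes>\<^sub>M borel) (\<lambda>\<omega>. (X \<omega>, Y \<omega>)) = distr M borel X \<Otimes>\<^sub>M distr M borel Y"
    using iv by (simp add: indep_var_distribution_eq)
  have dX: "distr M borel X = density lborel (\<lambda>x. ennreal (exponential_density l x))"
  proof -
    have "distr M borel X = distr M lborel X" by (rule distr_cong) auto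
    also have "\<dots> = density lborel (\<lambda>x. ennreal (exponential_density l x))"
      using DX by (simp add: distributed_def)
    finally show ?thesis .
  qed
  have sec: "emeasure (distr M borel Y) (Pair x -` A) = ennreal (F x)" for x
  proof -
    have "emeasure (distr M borel Y) (Pair x -` A) = emeasure M {\<omega> \<in> space M. Y \<omega> < x / c}"
      using c by (subst emeasure_distr) (auto simp: A_def field_simps intro!: arg_cong[where f="emeasure M"])
    also have "\<dots> = ennreal (prob {\<omega> \<in> space M. Y \<omega> < x / c})" by (simp add: emeasure_eq_measure)
    also have "prob {\<omega> \<in> space M. Y \<omega> < x / c} = F x"
    proof (cases "x < 0")
      case True
      have "x / c < 0" using True c by (simp add: divide_neg_pos)
      hence "prob {\<omega> \<in> space M. Y \<omega> < x / c} \<le> prob {\<omega> \<in> space M. Y \<omega> < 0}"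
        by (intro finite_measure_mono) auto
      also have "\<dots> = 0" using CDF[of 0] n by simp
      finally show ?thesis using True by (simp add: F_def measure_nonneg antisym)
    next
      case False
      thus ?thesis using CDF[of "x / c"] c by (simp add: F_def)
    qed
    finally show ?thesis .
  qed
  have "emeasure M {\<omega> \<in> space M. c * Y \<omega> < X \<omega>} = emeasure (distr M (borel \<Otimes>\<^sub>M borel) (\<lambda>\<omega>. (X \<omega>, Y \<omega>))) A"
    using Am by (subst emeasure_distr) (auto simp: A_def intro!: arg_cong[where f="emeasure M"])
  also have "\<dots> = emeasure (distr M borel X \<Otimes>\<^sub>M distr M borel Y) A" by (simp only: dj)
  also have "\<dots> = (\<integral>\<^sup>+x. emeasure (distr M borel Y) (Pair x -` A) \<partial>distr M borel X)"
    using Am by (intro DY.emeasure_pair_measure_alt) simp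
  also have "\<dots> = (\<integral>\<^sup>+x. ennreal (F x) \<partial>distr M borel X)" by (simp add: sec)
  also have "\<dots> = (\<integral>\<^sup>+x. ennreal (exponential_density l x) * ennreal (F x) \<partial>lborel)"
    unfolding dX by (subst nn_integral_density) auto
  also have "\<dots> = (\<integral>\<^sup>+x. ennreal (exponential_density l x * (1 - exp (- (x * l / c)))^n) \<partial>lborel)"
    by (intro nn_integral_cong) (auto simp: F_def exponential_density_def ennreal_mult' l less_imp_le)
  also have "\<dots> = ennreal (c * Beta (real n + 1) c)" by (rule beta_exp_integral[OF c l])
  also have "c * Beta (real n + 1) c = real n * Beta (1 + c) (real n)" by (rule Beta_shift[OF c n])
  finally have "ennreal (prob {\<omega> \<in> space M. c * Y \<omega> < X \<omega>}) = ennreal (real n * Beta (1 + c) (real n))"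
    by (simp add: emeasure_eq_measure)
  moreover have "real n * Beta (1 + c) (real n) \<ge> 0"
  proof -
    have "Gamma (1 + c) > 0" "Gamma (real n) > 0" "Gamma (1 + c + real n) > 0"
      using c n by (auto intro!: Gamma_real_pos)
    thus ?thesis by (simp add: Beta_def)
  qed
  ultimately show ?thesis by (simp add: Y_def)
qed

lemma (in prob_space) prob_mono_null:
  assumes "A \<subseteq> B \<union> N" "B \<in> events" "N \<in> events" "prob N = 0"
  shows "prob A \<le> prob B"
proof -
  have "prob A \<le> prob (B \<union> N)" using assms by (intro finite_measure_mono) auto
  also have "\<dots> \<le> prob B + prob N" using assms by (intro measure_subadditive) auto
  finally show ?thesis using assms by simp
qed

lemma nBeta2: "n \<ge> 1 \<Longrightarrow> real n * Beta 2 (real n) = 1 / (real n + 1)"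
proof -
  assume n: "n \<ge> 1"
  have nz: "real n \<notin> \<int>\<^sub>\<le>\<^sub>0" using n by (auto elim!: nonpos_Ints_cases)
  have nz2: "real n + 1 \<notin> \<int>\<^sub>\<le>\<^sub>0" using n by (auto elim!: nonpos_Ints_cases)
  have g1: "Gamma (real n + 1) = real n * Gamma (real n)" by (rule Gamma_plus1[OF nz])
  have g2: "Gamma (real n + 1 + 1) = (real n + 1) * Gamma (real n + 1)" by (rule Gamma_plus1[OF nz2])
  have g3: "Gamma (2 + real n) = (real n + 1) * (real n * Gamma (real n))"
    using g1 g2 by (simp add: add.commute add.left_commute)
  have gp: "Gamma (real n) > 0" using n by (intro Gamma_real_pos) auto
  have G2: "Gamma (2::real) = 1" using Gamma_fact[of 1, where 'a=real] by (simp add: numeral_2_eq_2)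
  have "real n * Beta 2 (real n) = real n * Gamma (real n) / ((real n + 1) * (real n * Gamma (real n)))"
    unfolding Beta_def by (simp add: g3 G2)
  also have "\<dots> = 1 / (real n + 1)"
  proof -
    have "Gamma (real n) \<noteq> 0" using gp by simp
    moreover have "real n \<noteq> 0" using n by simp
    ultimately show ?thesis by (simp add: divide_simps)
  qed
  finally show ?thesis .
qed

theorem theorem4:
  fixes M :: "'a measure" and X :: "'a \<Rightarrow> real" and Xs :: "nat \<Rightarrow> 'a \<Rightarrow> real"
    and l \<rho> :: real and n :: nat
  assumes "prob_space M"
    and "l > 0" and "\<rho> > 1" and "n \<ge> 1"
    and "distributed M lborel X (exponential_density l)"
    and "\<And>i. i \<in> {1..n} \<Longrightarrow> distributed M lborel (Xs i) (exponential_density l)"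
    and "prob_space.indep_vars M (\<lambda>_. borel) (\<lambda>i. if i = 0 then X else Xs i) {0..n}"
  shows "(let J = (\<lambda>\<omega>. log \<rho> (Max ((\<lambda>i. Xs i \<omega>) ` {1..n})));
              p_last = measure M {\<omega> \<in> space M.
                 \<rho> powr (real_of_int \<lceil>J \<omega>\<rceil> - 1) < X \<omega> \<and> X \<omega> \<le> \<rho> powr (real_of_int \<lceil>J \<omega>\<rceil>)};
              p_tail = measure M {\<omega> \<in> space M. X \<omega> > \<rho> powr (real_of_int \<lceil>J \<omega>\<rceil>)}
          in p_last \<le> real n * Beta (1 + 1 / \<rho>) (real n) - real n * Beta (1 + \<rho>) (real n)
           \<and> real n * Beta (1 + \<rho>) (real n) \<le> p_tail
           \<and> p_tail \<le> 1 / (real n + 1))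
     \<and> (\<lambda>m::nat. real m * Beta (1 + 1 / \<rho>) (real m) - real m * Beta (1 + \<rho>) (real m))
         \<sim>[at_top] (\<lambda>m. Gamma (1 + 1 / \<rho>) / real m powr (1 / \<rho>) - Gamma (1 + \<rho>) / real m powr \<rho>)
     \<and> (\<lambda>m::nat. Gamma (1 + \<rho>) / real m powr \<rho>) \<sim>[at_top] (\<lambda>m. real m * Beta (1 + \<rho>) (real m))
     \<and> (\<lambda>m::nat. 1 / (real m + 1)) \<sim>[at_top] (\<lambda>m. 1 / real m)"
proof -
  interpret prob_space M by (rule assms(1))
  note l = assms(2) and r = assms(3) and n = assms(4) and DX = assms(5) and DXs = assms(6)
    and ind = assms(7)
  define Y where "Y \<omega> = Max ((\<lambda>i. Xs i \<omega>) ` {1..n})" for \<omega>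
  define k where "k \<omega> = real_of_int \<lceil>log \<rho> (Y \<omega>)\<rceil>" for \<omega>
  have Xm[measurable]: "X \<in> borel_measurable M" using DX by (auto simp: distributed_def)
  have Xsm[measurable]: "Xs i \<in> borel_measurable M" if "i \<in> {1..n}" for i
    using DXs[OF that] by (auto simp: distributed_def)
  have Ym[measurable]: "Y \<in> borel_measurable M" unfolding Y_def[abs_def]
    by (rule borel_measurable_Max) (auto intro: Xsm)
  have km[measurable]: "k \<in> borel_measurable M" unfolding k_def[abs_def] by measurable
  have core': "prob {\<omega> \<in> space M. c * Y \<omega> < X \<omega>} = real n * Beta (1 + c) (real n)" if "c > 0" for c
    unfolding Y_def by (rule core[OF l that n DX DXs ind])
  have X1[measurable]: "Xs 1 \<in> borel_measurable M" using n by (intro Xsm) auto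
  define N where "N = {\<omega> \<in> space M. Y \<omega> \<le> 0}"
  have Nm: "N \<in> events" unfolding N_def by measurable
  have N0: "prob N = 0"
  proof -
    have "prob N \<le> prob {\<omega> \<in> space M. Xs 1 \<omega> \<le> 0}"
    proof (intro finite_measure_mono)
      show "N \<subseteq> {\<omega> \<in> space M. Xs 1 \<omega> \<le> 0}"
      proof
        fix \<omega> assume "\<omega> \<in> N"
        moreover have "Xs 1 \<omega> \<le> Y \<omega>" unfolding Y_def using n by (intro Max_ge) auto
        ultimately show "\<omega> \<in> {\<omega> \<in> space M. Xs 1 \<omega> \<le> 0}" by (auto simp: N_def)
      qed
      show "{\<omega> \<in> space M. Xs 1 \<omega> \<le> 0} \<in> events" by measurable
    qed
    also have "\<dots> = 0" using exponential_distributedD_le[OF DXs[of 1] _ l, of 0] n by simp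
    finally show ?thesis by (simp add: measure_nonneg antisym)
  qed
  have key: "Y \<omega> \<le> \<rho> powr k \<omega> \<and> \<rho> powr k \<omega> < \<rho> * Y \<omega>" if "Y \<omega> > 0" for \<omega>
  proof -
    define j where "j = log \<rho> (Y \<omega>)"
    have pj: "\<rho> powr j = Y \<omega>" using that r by (simp add: j_def)
    have k1: "j \<le> k \<omega>" "k \<omega> < j + 1" unfolding k_def j_def by linarith+
    have "\<rho> powr j \<le> \<rho> powr k \<omega>" using k1 r by simp
    moreover have "\<rho> powr k \<omega> < \<rho> powr (j + 1)" using k1 r by simp
    moreover have "\<rho> powr (j + 1) = \<rho> * Y \<omega>" using pj r by (simp add: powr_add)
    ultimately show ?thesis using pj by simp
  qed
  have kpos: "\<rho> powr k \<omega> > 0" for \<omega> using r by simp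
  have kdiv: "\<rho> powr (k \<omega> - 1) = \<rho> powr k \<omega> / \<rho>" for \<omega> using r by (simp add: powr_diff)
  define Et where "Et = {\<omega> \<in> space M. X \<omega> > \<rho> powr k \<omega>}"
  define E1 where "E1 = {\<omega> \<in> space M. \<rho> powr (k \<omega> - 1) < X \<omega>}"
  define El where "El = {\<omega> \<in> space M. \<rho> powr (k \<omega> - 1) < X \<omega> \<and> X \<omega> \<le> \<rho> powr k \<omega>}"
  have Etm: "Et \<in> events" unfolding Et_def by measurable
  have E1m: "E1 \<in> events" unfolding E1_def by measurable
  have T: "{\<omega> \<in> space M. c * Y \<omega> < X \<omega>} \<in> events" for c by measurable
  have r0: "\<rho> > 0" using r by simp
  have a: "prob Et \<le> 1 / (real n + 1)"
  proof -
    have "prob Et \<le> prob {\<omega> \<in> space M. 1 * Y \<omega> < X \<omega>}"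
    proof (rule prob_mono_null[OF _ T Nm N0])
      show "Et \<subseteq> {\<omega> \<in> space M. 1 * Y \<omega> < X \<omega>} \<union> N"
      proof
        fix \<omega> assume w: "\<omega> \<in> Et"
        show "\<omega> \<in> {\<omega> \<in> space M. 1 * Y \<omega> < X \<omega>} \<union> N"
        proof (cases "Y \<omega> > 0")
          case True
          thus ?thesis using key[OF True] w by (auto simp: Et_def)
        qed (use w in \<open>auto simp: Et_def N_def\<close>)
      qed
    qed
    also have "\<dots> = 1 / (real n + 1)" using core'[of 1] nBeta2[OF n] by simp
    finally show ?thesis .
  qed
  have b: "real n * Beta (1 + \<rho>) (real n) \<le> prob Et"
  proof -
    have "prob {\<omega> \<in> space M. \<rho> * Y \<omega> < X \<omega>} \<le> prob Et"
    proof (rule prob_mono_null[OF _ Etm Nm N0])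
      show "{\<omega> \<in> space M. \<rho> * Y \<omega> < X \<omega>} \<subseteq> Et \<union> N"
      proof
        fix \<omega> assume w: "\<omega> \<in> {\<omega> \<in> space M. \<rho> * Y \<omega> < X \<omega>}"
        show "\<omega> \<in> Et \<union> N"
        proof (cases "Y \<omega> > 0")
          case True
          thus ?thesis using key[OF True] w by (auto simp: Et_def)
        qed (use w in \<open>auto simp: Et_def N_def\<close>)
      qed
    qed
    thus ?thesis using core'[OF r0] by simp
  qed
  have c: "prob E1 \<le> real n * Beta (1 + 1 / \<rho>) (real n)"
  proof -
    have "prob E1 \<le> prob {\<omega> \<in> space M. (1 / \<rho>) * Y \<omega> < X \<omega>}"
    proof (rule prob_mono_null[OF _ T Nm N0])
      show "E1 \<subseteq> {\<omega> \<in> space M. (1 / \<rho>) * Y \<omega> < X \<omega>} \<union> N"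
      proof
        fix \<omega> assume w: "\<omega> \<in> E1"
        show "\<omega> \<in> {\<omega> \<in> space M. (1 / \<rho>) * Y \<omega> < X \<omega>} \<union> N"
        proof (cases "Y \<omega> > 0")
          case True
          have "Y \<omega> / \<rho> \<le> \<rho> powr k \<omega> / \<rho>" using key[OF True] r0 by (simp add: divide_right_mono)
          thus ?thesis using w kdiv[of \<omega>] by (auto simp: E1_def)
        qed (use w in \<open>auto simp: E1_def N_def\<close>)
      qed
    qed
    thus ?thesis using core'[of "1 / \<rho>"] r0 by simp
  qed
  have d: "prob El = prob E1 - prob Et"
  proof -
    have "El = E1 - Et" by (auto simp: El_def E1_def Et_def)
    moreover have "Et \<subseteq> E1"
    proof
      fix \<omega> assume "\<omega> \<in> Et"
      moreover have "\<rho> powr (k \<omega> - 1) < \<rho> powr k \<omega>" using r by simp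
      ultimately show "\<omega> \<in> E1" by (auto simp: Et_def E1_def)
    qed
    ultimately show ?thesis using E1m Etm by (simp add: finite_measure_Diff)
  qed
  have main: "prob El \<le> real n * Beta (1 + 1 / \<rho>) (real n) - real n * Beta (1 + \<rho>) (real n)
           \<and> real n * Beta (1 + \<rho>) (real n) \<le> prob Et \<and> prob Et \<le> 1 / (real n + 1)"
    using a b c d by linarith
  show ?thesis
    using main asymp_part[OF r]
    unfolding Let_def Y_def[symmetric] k_def[symmetric] El_def Et_def
    by simp
qed

end
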